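(* Let $\mathcal A$ be a linear time-invariant algorithm written as a sequence of $m$ update equations executed in the order $(1,\dots,m)$ in each iteration, each update equation containing at most one oracle call. For any cyclic permutation $\tilde\pi=(l+1,\dots,m,1,\dots,l)$ of $(1,\dots,m)$, the algorithm $P_{\tilde\pi}\mathcal A$ and $\mathcal A$ are shift-equivalent.
   Context: A linear time-invariant algorithm has state $x^k$, oracle arguments $y^k$ and oracle outputs $u^k$ related by $x^{k+1}=Ax^k+Bu^k$, $y^k=Cx^k+Du^k$, $u^k=\phi(y^k)$ for real matrices $(A,B,C,D)$ and an oracle map $\phi$; in practice it is written as a list of update equations (each linear in the states and oracle outputs) executed sequentially within each iteration. For a permutation $\tilde\pi$ of $(1,\dots,m)$, $P_{\tilde\pi}\mathcal A$ denotes the algorithm that performs the update equations of $\mathcal A$ in the order $\tilde\pi$ at each iteration. The oracle sequence of an algorithm is the sequence of oracle calls (oracle together with its argument) made when it is run. Two algorithms are shift-equivalent (on a set of problems) if for any problem in the set and any initialization of one algorithm there exists an initialization of the other such that their oracle sequences match up to a prefix (i.e. agree after deleting finitely many initial oracle calls from one of them). *)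

theory Defs
  imports Complex_Main "HOL-Library.Sublist"
begin

text \<open>An update equation acts on the full algorithm state (type 'x, a real vector space
holding all state variables). It is either oracle-free, x := M x, or contains exactly
one oracle call: with argument y = C x, output u = phi o y, and update x := M x + N u.
Oracle arguments/outputs live in a real vector space 'v; oracles are indexed by 'o.\<close>

datatype ('x, 'v, 'o) update_eqn =
  UpdEq "'x \<Rightarrow> 'x" "('o \<times> ('x \<Rightarrow> 'v) \<times> ('v \<Rightarrow> 'x)) option"

type_synonym ('x, 'v, 'o) algorithm = "('x, 'v, 'o) update_eqn list"

definition lti_alg :: "('x::real_vector, 'v::real_vector, 'o) algorithm \<Rightarrow> bool" where
  "lti_alg A \<longleftrightarrow> (\<forall>e \<in> set A. case e of UpdEq M oc \<Rightarrow>
     linear M \<and> (case oc of None \<Rightarrow> True | Some (k, C, N) \<Rightarrow> linear C \<and> linear N))"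

fun step_eqn :: "('o \<Rightarrow> 'v \<Rightarrow> 'v) \<Rightarrow> ('x::real_vector, 'v, 'o) update_eqn \<Rightarrow> 'x
                  \<Rightarrow> 'x \<times> ('o \<times> 'v) list" where
  "step_eqn phi (UpdEq M None) x = (M x, [])"
| "step_eqn phi (UpdEq M (Some (k, C, N))) x = (M x + N (phi k (C x)), [(k, C x)])"

fun run_iter :: "('o \<Rightarrow> 'v \<Rightarrow> 'v) \<Rightarrow> ('x::real_vector, 'v, 'o) algorithm \<Rightarrow> 'x
                  \<Rightarrow> 'x \<times> ('o \<times> 'v) list" where
  "run_iter phi [] x = (x, [])"
| "run_iter phi (e # es) x =
     (let (x1, c1) = step_eqn phi e x; (x2, c2) = run_iter phi es x1 in (x2, c1 @ c2))"

text \<open>Oracle calls made during the first n iterations from initial state x.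
The oracle sequence of the run is the limit (union) of this prefix-increasing chain.\<close>
fun oracle_trace :: "('o \<Rightarrow> 'v \<Rightarrow> 'v) \<Rightarrow> ('x::real_vector, 'v, 'o) algorithm \<Rightarrow> 'x
                      \<Rightarrow> nat \<Rightarrow> ('o \<times> 'v) list" where
  "oracle_trace phi A x 0 = []"
| "oracle_trace phi A x (Suc n) =
     snd (run_iter phi A x) @ oracle_trace phi A (fst (run_iter phi A x)) n"

text \<open>The (possibly infinite) sequence given by chain S equals p followed by the
sequence given by chain T (equality of the limits of the prefix chains).\<close>
definition seq_eq_prefix :: "'a list \<Rightarrow> (nat \<Rightarrow> 'a list) \<Rightarrow> (nat \<Rightarrow> 'a list) \<Rightarrow> bool" where
  "seq_eq_prefix p S T \<longleftrightarrow>
     (\<forall>n. \<exists>n'. prefix (p @ T n) (S n')) \<and> (\<forall>n. \<exists>n'. prefix (S n) (p @ T n'))"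

text \<open>Two oracle sequences match up to a prefix: they agree after deleting finitely
many initial oracle calls from one of them.\<close>
definition match_up_to_prefix :: "(nat \<Rightarrow> 'a list) \<Rightarrow> (nat \<Rightarrow> 'a list) \<Rightarrow> bool" where
  "match_up_to_prefix S T \<longleftrightarrow> (\<exists>p. seq_eq_prefix p S T \<or> seq_eq_prefix p T S)"

definition shift_equivalent ::
  "('x::real_vector, 'v, 'o) algorithm \<Rightarrow> ('x, 'v, 'o) algorithm \<Rightarrow> bool" where
  "shift_equivalent A B \<longleftrightarrow> (\<forall>phi.
     (\<forall>x0. \<exists>z0. match_up_to_prefix (oracle_trace phi A x0) (oracle_trace phi B z0)) \<and>
     (\<forall>z0. \<exists>x0. match_up_to_prefix (oracle_trace phi B z0) (oracle_trace phi A x0)))"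

text \<open>P_pi A: perform the update equations of A in the order \<pi> (0-indexed).\<close>
definition permute_alg :: "(nat \<Rightarrow> nat) \<Rightarrow> 'e list \<Rightarrow> 'e list" where
  "permute_alg \<pi> A = map (\<lambda>i. A ! \<pi> i) [0..<length A]"

end

theory Submission
  imports Defs
begin

lemma run_iter_append:
  "run_iter phi (P @ Q) x =
     (fst (run_iter phi Q (fst (run_iter phi P x))),
      snd (run_iter phi P x) @ snd (run_iter phi Q (fst (run_iter phi P x))))"
  by (induction P arbitrary: x) (auto split: prod.splits)

lemma trace_le:
  "\<exists>r. snd (run_iter phi P x) @ oracle_trace phi (Q @ P) (fst (run_iter phi P x)) n
       = oracle_trace phi (P @ Q) x n @ r"
proof (induction n arbitrary: x)
  case 0
  then show ?case by simp
next
  case (Suc n)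
  define y where "y = fst (run_iter phi P x)"
  define x' where "x' = fst (run_iter phi Q y)"
  obtain r where r: "snd (run_iter phi P x') @ oracle_trace phi (Q @ P) (fst (run_iter phi P x')) n
       = oracle_trace phi (P @ Q) x' n @ r" using Suc by blast
  show ?case
    by (rule exI[of _ r]) (simp add: run_iter_append y_def[symmetric] x'_def[symmetric] r[symmetric])
qed

lemma trace_ge:
  "prefix (snd (run_iter phi P x) @ oracle_trace phi (Q @ P) (fst (run_iter phi P x)) n)
       (oracle_trace phi (P @ Q) x (Suc n))"
proof (induction n arbitrary: x)
  case 0
  then show ?case by (simp add: run_iter_append)
next
  case (Suc n)
  define y where "y = fst (run_iter phi P x)"
  define x' where "x' = fst (run_iter phi Q y)"
  have h: "prefix (snd (run_iter phi P x') @ oracle_trace phi (Q @ P) (fst (run_iter phi P x')) n)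
       (oracle_trace phi (P @ Q) x' (Suc n))" using Suc by blast
  have e1: "oracle_trace phi (P @ Q) x (Suc (Suc n)) =
     snd (run_iter phi P x) @ snd (run_iter phi Q y) @ oracle_trace phi (P @ Q) x' (Suc n)"
    by (simp only: oracle_trace.simps run_iter_append y_def[symmetric] x'_def[symmetric]) simp
  have e2: "oracle_trace phi (Q @ P) y (Suc n) =
     snd (run_iter phi Q y) @ snd (run_iter phi P x') @ oracle_trace phi (Q @ P) (fst (run_iter phi P x')) n"
    by (simp only: oracle_trace.simps run_iter_append y_def[symmetric] x'_def[symmetric]) simp
  show ?case unfolding y_def[symmetric] e1 e2 using h by simp
qed

lemma rot_seq:
  "seq_eq_prefix (snd (run_iter phi P x)) (oracle_trace phi (P @ Q) x)
      (oracle_trace phi (Q @ P) (fst (run_iter phi P x)))"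
  unfolding seq_eq_prefix_def
proof (intro conjI allI)
  fix n
  show "\<exists>n'. prefix (snd (run_iter phi P x) @ oracle_trace phi (Q @ P) (fst (run_iter phi P x)) n)
               (oracle_trace phi (P @ Q) x n')"
    using trace_ge by blast
  show "\<exists>n'. prefix (oracle_trace phi (P @ Q) x n)
               (snd (run_iter phi P x) @ oracle_trace phi (Q @ P) (fst (run_iter phi P x)) n')"
    using trace_le[of phi P x Q n] by (metis prefixI)
qed

lemma perm_rot:
  assumes "l < length A"
  shows "permute_alg (\<lambda>i. (i + l) mod length A) A = drop l A @ take l A"
proof -
  have "permute_alg (\<lambda>i. (i + l) mod length A) A = rotate l A"
    by (rule nth_equalityI) (auto simp: permute_alg_def nth_rotate add.commute)
  also have "\<dots> = drop l A @ take l A" using assms by (simp add: rotate_drop_take)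
  finally show ?thesis .
qed

theorem proposition6p1:
  fixes A :: "('x::real_vector, 'v::real_vector, 'o) algorithm"
    and l :: nat
  assumes "lti_alg A"
    and "l < length A"
  shows "shift_equivalent (permute_alg (\<lambda>i. (i + l) mod length A) A) A"
proof -
  define P where "P = drop l A"
  define Q where "Q = take l A"
  have A: "A = Q @ P" unfolding P_def Q_def by simp
  have B: "permute_alg (\<lambda>i. (i + l) mod length A) A = P @ Q"
    using perm_rot[OF assms(2)] unfolding P_def Q_def by simp
  show ?thesis unfolding B shift_equivalent_def match_up_to_prefix_def
  proof (intro allI conjI)
    fix phi and x0 :: 'x
    show "\<exists>z0. \<exists>p. seq_eq_prefix p (oracle_trace phi (P @ Q) x0) (oracle_trace phi A z0) \<or>
                 seq_eq_prefix p (oracle_trace phi A z0) (oracle_trace phi (P @ Q) x0)"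
      unfolding A using rot_seq by blast
  next
    fix phi and z0 :: 'x
    show "\<exists>x0. \<exists>p. seq_eq_prefix p (oracle_trace phi A z0) (oracle_trace phi (P @ Q) x0) \<or>
                 seq_eq_prefix p (oracle_trace phi (P @ Q) x0) (oracle_trace phi A z0)"
      unfolding A using rot_seq by blast
  qed
qed

end
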